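(* Let $n>3$ be a natural number, $\varepsilon\in(0,0.5)$ and $\delta\in(0,0.5)$. Let $P(\delta)=(p_{i,j})_{i,j=1}^n$ be the $n\times n$ stochastic matrix with $p_{i,i}=1-\varepsilon$ for all $i$; $p_{1,2}=\varepsilon$; $p_{i,i+1}=(1-\delta)\varepsilon$ for $i=2,\ldots,n-1$; $p_{i+1,i}=\delta\varepsilon$ for $i=1,\ldots,n-2$; $p_{n,n-1}=\varepsilon$; and all other entries equal to $0$. Let $\pi^*(\delta)=(\pi^*_k(\delta))_{k=1}^n$ be the unique probability (row) vector satisfying $\pi^*(\delta)P(\delta)=\pi^*(\delta)$, and let $E_{\pi^*}(\delta)=\sum_{k=1}^n k\,\pi^*_k(\delta)$. Then $$E_{\pi^*}(\delta)=\frac{\delta^{n-2}(2\delta-1)}{2\delta^{n-1}-2(1-\delta)^{n-1}}+\frac{\delta^{n-1}(2\delta-1)}{2(1-\delta)^2(\delta^{n-1}-(1-\delta)^{n-1})}\sum_{k=2}^{n-1}k\left(\frac{1-\delta}{\delta}\right)^k+n\,\frac{(1-\delta)^{n-2}(2\delta-1)}{2\delta^{n-1}-2(1-\delta)^{n-1}},$$ and consequently $$\lim_{\delta\to0^+}E_{\pi^*}(\delta)=\frac{2n-1}{2}.$$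
   Context: $P(\delta)$ is the transition matrix of a Markov chain on states $s_1,\ldots,s_n$ (probability distributions are row vectors multiplied on the left of $P$); $\pi^*(\delta)$ is its stationary distribution and $E_{\pi^*}$ is called the expected state. *)

theory Defs
  imports "HOL-Analysis.Analysis"
begin

definition Pmat :: "nat \<Rightarrow> real \<Rightarrow> real \<Rightarrow> nat \<Rightarrow> nat \<Rightarrow> real" where
  "Pmat n \<epsilon> \<delta> i j =
     (if i \<in> {1..n} \<and> j \<in> {1..n} then
        (if i = j then 1 - \<epsilon>
         else if i = 1 \<and> j = 2 then \<epsilon>
         else if 2 \<le> i \<and> i \<le> n - 1 \<and> j = i + 1 then (1 - \<delta>) * \<epsilon>
         else if 1 \<le> j \<and> j \<le> n - 2 \<and> i = j + 1 then \<delta> * \<epsilon>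
         else if i = n \<and> j = n - 1 then \<epsilon>
         else 0)
      else 0)"

definition is_stat_dist :: "nat \<Rightarrow> (nat \<Rightarrow> nat \<Rightarrow> real) \<Rightarrow> (nat \<Rightarrow> real) \<Rightarrow> bool" where
  "is_stat_dist n P \<pi> \<longleftrightarrow>
     (\<forall>k. k \<notin> {1..n} \<longrightarrow> \<pi> k = 0) \<and>
     (\<forall>k\<in>{1..n}. 0 \<le> \<pi> k) \<and>
     (\<Sum>k=1..n. \<pi> k) = 1 \<and>
     (\<forall>j\<in>{1..n}. (\<Sum>i=1..n. \<pi> i * P i j) = \<pi> j)"

definition stat_dist :: "nat \<Rightarrow> (nat \<Rightarrow> nat \<Rightarrow> real) \<Rightarrow> nat \<Rightarrow> real" where
  "stat_dist n P = (THE \<pi>. is_stat_dist n P \<pi>)"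

definition expected_state :: "nat \<Rightarrow> (nat \<Rightarrow> nat \<Rightarrow> real) \<Rightarrow> real" where
  "expected_state n P = (\<Sum>k=1..n. real k * stat_dist n P k)"

end

theory Submission
  imports Defs
begin

lemma Pmat_nz:
  assumes "Pmat n e d i j \<noteq> 0"
  shows "i = j \<or> j = i + 1 \<or> i = j + 1"
  using assms by (auto simp: Pmat_def split: if_splits)

lemma Pmat_out: "i \<notin> {1..n} \<or> j \<notin> {1..n} \<Longrightarrow> Pmat n e d i j = 0"
  by (auto simp: Pmat_def)

lemma col_sum:
  assumes van: "\<forall>k. k \<notin> {1..n} \<longrightarrow> \<pi> k = 0" and j: "j \<in> {1..n}"
  shows "(\<Sum>i=1..n. \<pi> i * Pmat n e d i j) =
     \<pi> (j-1) * Pmat n e d (j-1) j + \<pi> j * Pmat n e d j j + \<pi> (j+1) * Pmat n e d (j+1) j"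
proof -
  let ?g = "\<lambda>i. \<pi> i * Pmat n e d i j"
  have 1: "sum ?g {1..n} = sum ?g ({1..n} \<union> {j-1,j,j+1})"
    by (rule sum.mono_neutral_left) (use van in auto)
  have 2: "sum ?g {j-1,j,j+1} = sum ?g ({1..n} \<union> {j-1,j,j+1})"
  proof (rule sum.mono_neutral_left)
    show "\<forall>i\<in>{1..n} \<union> {j - 1, j, j + 1} - {j - 1, j, j + 1}. ?g i = 0"
    proof
      fix i assume "i \<in> {1..n} \<union> {j - 1, j, j + 1} - {j - 1, j, j + 1}"
      then have "\<not> (i = j \<or> j = i + 1 \<or> i = j + 1)" using j by auto
      then have "Pmat n e d i j = 0" using Pmat_nz by blast
      then show "?g i = 0" by simp
    qed
  qed auto
  have 3: "sum ?g {j-1,j,j+1} = ?g (j-1) + ?g j + ?g (j+1)"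
  proof -
    have "j-1 \<noteq> j" "j-1 \<noteq> j+1" "j \<noteq> j+1" using j by auto
    then show ?thesis by simp
  qed
  show ?thesis using 1 2 3 by simp
qed

lemma rowsum:
  assumes "n > 3" "j \<in> {1..n}"
  shows "Pmat n e d j (j-1) + Pmat n e d j j + Pmat n e d j (j+1) = 1"
  using assms by (auto simp: Pmat_def algebra_simps)

definition flow where
  "flow n e d \<pi> j = \<pi> j * Pmat n e d j (j+1) - \<pi> (j+1) * Pmat n e d (j+1) j"

lemma stat_iff_flow:
  assumes "n > 3" and van: "\<forall>k. k \<notin> {1..n} \<longrightarrow> \<pi> k = 0" and j: "j \<in> {1..n}"
  shows "((\<Sum>i=1..n. \<pi> i * Pmat n e d i j) = \<pi> j) \<longleftrightarrow> flow n e d \<pi> (j-1) = flow n e d \<pi> j"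
proof -
  have r: "\<pi> j = \<pi> j * Pmat n e d j (j-1) + \<pi> j * Pmat n e d j j + \<pi> j * Pmat n e d j (j+1)"
    using rowsum[OF assms(1) j, of e d] by (metis distrib_left mult.right_neutral)
  have jj: "j - 1 + 1 = j" using j by auto
  show ?thesis unfolding col_sum[OF van j] flow_def jj using r by linarith
qed

lemma flow0:
  assumes van: "\<forall>k. k \<notin> {1..n} \<longrightarrow> \<pi> k = 0"
  shows "flow n e d \<pi> 0 = 0" "flow n e d \<pi> n = 0"
  using van by (auto simp: flow_def Pmat_def)

lemma stat_iff:
  assumes "n > 3" and van: "\<forall>k. k \<notin> {1..n} \<longrightarrow> \<pi> k = 0"
  shows "(\<forall>j\<in>{1..n}. (\<Sum>i=1..n. \<pi> i * Pmat n e d i j) = \<pi> j) \<longleftrightarrow>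
         (\<forall>j. 1 \<le> j \<and> j < n \<longrightarrow> flow n e d \<pi> j = 0)"
proof
  assume st: "\<forall>j\<in>{1..n}. (\<Sum>i=1..n. \<pi> i * Pmat n e d i j) = \<pi> j"
  have "\<forall>j. j \<le> n \<longrightarrow> flow n e d \<pi> j = 0"
  proof
    fix j show "j \<le> n \<longrightarrow> flow n e d \<pi> j = 0"
    proof (induction j)
      case 0 then show ?case using flow0[OF van] by simp
    next
      case (Suc j)
      show ?case
      proof
        assume "Suc j \<le> n"
        then have "Suc j \<in> {1..n}" by auto
        then have "flow n e d \<pi> (Suc j - 1) = flow n e d \<pi> (Suc j)"
          using st stat_iff_flow[OF assms] by blast
        then show "flow n e d \<pi> (Suc j) = 0" using Suc \<open>Suc j \<le> n\<close> by simp
      qed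
    qed
  qed
  then show "\<forall>j. 1 \<le> j \<and> j < n \<longrightarrow> flow n e d \<pi> j = 0" by auto
next
  assume fl: "\<forall>j. 1 \<le> j \<and> j < n \<longrightarrow> flow n e d \<pi> j = 0"
  have fa: "flow n e d \<pi> j = 0" if "j \<le> n" for j
    using fl flow0[OF van] that by (cases "j = 0 \<or> j = n") auto
  show "\<forall>j\<in>{1..n}. (\<Sum>i=1..n. \<pi> i * Pmat n e d i j) = \<pi> j"
  proof
    fix j assume j: "j \<in> {1..n}"
    have "flow n e d \<pi> (j-1) = flow n e d \<pi> j" using fa j by auto
    then show "(\<Sum>i=1..n. \<pi> i * Pmat n e d i j) = \<pi> j" using stat_iff_flow[OF assms j] by simp
  qed
qed

lemma dn_val:
  assumes "n > 3" "1 \<le> j" "j < n"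
  shows "Pmat n e d (j+1) j = (if j = n - 1 then e else d * e)"
  using assms by (auto simp: Pmat_def)

lemma up_val:
  assumes "n > 3" "1 \<le> j" "j < n"
  shows "Pmat n e d j (j+1) = (if j = 1 then e else (1 - d) * e)"
  using assms by (auto simp: Pmat_def)


definition wv :: "nat \<Rightarrow> real \<Rightarrow> nat \<Rightarrow> real" where
  "wv n d k = (if k = 1 then d^(n-2) else if 2 \<le> k \<and> k \<le> n-1 then (1-d)^(k-2) * d^(n-1-k)
     else if k = n then (1-d)^(n-2) else 0)"

lemma wv_out: "n > 3 \<Longrightarrow> k \<notin> {1..n} \<Longrightarrow> wv n d k = 0"
  by (auto simp: wv_def)

lemma wv_pos: "n > 3 \<Longrightarrow> 0 < d \<Longrightarrow> d < 1 \<Longrightarrow> k \<in> {1..n} \<Longrightarrow> wv n d k > 0"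
  by (auto simp: wv_def)

lemma wv_nonneg: "0 < d \<Longrightarrow> d < 1 \<Longrightarrow> wv n d k \<ge> 0"
  by (auto simp: wv_def)

lemma wv_flow:
  assumes "n > 3" "1 \<le> j" "j < n"
  shows "wv n d j * Pmat n e d j (j+1) = wv n d (j+1) * Pmat n e d (j+1) j"
proof -
  consider "j = 1" | "j = n - 1" | "2 \<le> j \<and> j \<le> n - 2" using assms by linarith
  then show ?thesis
  proof cases
    case 1
    have "n - 2 = Suc (n - 3)" using assms by auto
    moreover have "n - Suc (Suc (Suc 0)) = n - 3" "Suc (Suc 0) \<le> n - Suc 0" using assms by auto
    ultimately show ?thesis using 1 assms unfolding up_val[OF assms] dn_val[OF assms] by (simp add: wv_def)
  next
    case 2
    have "n - 2 = Suc (n - 3)" using assms by auto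
    moreover have "n - Suc (Suc (Suc 0)) = n - 3" "n - Suc 0 \<noteq> Suc 0" "\<not> n \<le> n - Suc 0" using assms by auto
    ultimately show ?thesis using 2 assms unfolding up_val[OF assms] dn_val[OF assms] by (simp add: wv_def)
  next
    case 3
    have e1: "j - 1 = Suc (j - 2)" and e2: "n - 1 - j = Suc (n - 2 - j)" using 3 assms by auto
    have u: "Pmat n e d j (j+1) = (1-d)*e" and dd: "Pmat n e d (j+1) j = d*e"
      unfolding up_val[OF assms] dn_val[OF assms] using 3 assms by auto
    have w1: "wv n d j = (1-d)^(j-2) * d^(n-1-j)" using 3 assms by (simp add: wv_def)
    have a1: "j + 1 - 2 = j - 1" "n - 1 - (j+1) = n - 2 - j" "j + 1 \<noteq> 1" "2 \<le> j + 1 \<and> j + 1 \<le> n - 1"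
      using 3 assms by auto
    have w2: "wv n d (j+1) = (1-d)^(j-1) * d^(n-2-j)" unfolding wv_def using a1 by presburger
    show ?thesis unfolding u dd w1 w2 e1 e2 by (simp add: algebra_simps)
  qed
qed

lemma uniq:
  assumes n: "n > 3" and e: "0 < e" and d: "0 < d" "d < 1"
    and st: "is_stat_dist n (Pmat n e d) \<pi>"
  shows "\<pi> = (\<lambda>k. wv n d k / (\<Sum>k=1..n. wv n d k))"
proof -
  have van: "\<forall>k. k \<notin> {1..n} \<longrightarrow> \<pi> k = 0" and sum1: "(\<Sum>k=1..n. \<pi> k) = 1"
    and stj: "\<forall>j\<in>{1..n}. (\<Sum>i=1..n. \<pi> i * Pmat n e d i j) = \<pi> j"
    using st unfolding is_stat_dist_def by auto
  have fl: "\<forall>j. 1 \<le> j \<and> j < n \<longrightarrow> flow n e d \<pi> j = 0"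
    using stat_iff[OF n van] stj by blast
  have prp: "j \<le> n \<longrightarrow> \<pi> j * wv n d 1 = \<pi> 1 * wv n d j" if "1 \<le> j" for j
    using that
  proof (induction j rule: dec_induct)
    case base then show ?case by simp
  next
    case (step j)
    show ?case
    proof
      assume "Suc j \<le> n"
      then have jn: "j < n" by simp
      have dnz: "Pmat n e d (j+1) j \<noteq> 0" using dn_val[OF n step(1) jn] e d by auto
      have f1: "\<pi> j * Pmat n e d j (j+1) = \<pi> (j+1) * Pmat n e d (j+1) j"
        using fl step(1) jn unfolding flow_def by auto
      have f2: "wv n d j * Pmat n e d j (j+1) = wv n d (j+1) * Pmat n e d (j+1) j"
        using wv_flow[OF n step(1) jn] .
      have ih: "\<pi> j * wv n d 1 = \<pi> 1 * wv n d j" using step jn by simp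
      have "\<pi> (j+1) * wv n d 1 * Pmat n e d (j+1) j = \<pi> 1 * wv n d (j+1) * Pmat n e d (j+1) j"
      proof -
        have "\<pi> (j+1) * wv n d 1 * Pmat n e d (j+1) j = (\<pi> j * Pmat n e d j (j+1)) * wv n d 1"
          using f1 by (simp add: algebra_simps)
        also have "\<dots> = (\<pi> j * wv n d 1) * Pmat n e d j (j+1)" by (simp add: algebra_simps)
        also have "\<dots> = \<pi> 1 * (wv n d j * Pmat n e d j (j+1))" using ih by (simp add: algebra_simps)
        also have "\<dots> = \<pi> 1 * wv n d (j+1) * Pmat n e d (j+1) j" using f2 by (simp add: algebra_simps)
        finally show ?thesis .
      qed
      then show "\<pi> (Suc j) * wv n d 1 = \<pi> 1 * wv n d (Suc j)" using dnz by simp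
    qed
  qed
  define W where "W = (\<Sum>k=1..n. wv n d k)"
  have w1: "wv n d 1 > 0" using wv_pos[OF n d] n by auto
  have Wpos: "W > 0" unfolding W_def
    by (rule sum_pos) (use wv_pos[OF n d] n in auto)
  have "wv n d 1 = (\<Sum>k=1..n. \<pi> k * wv n d 1)" using sum1 by (simp add: sum_distrib_right[symmetric])
  also have "\<dots> = (\<Sum>k=1..n. \<pi> 1 * wv n d k)" by (rule sum.cong) (use prp in auto)
  also have "\<dots> = \<pi> 1 * W" by (simp add: W_def sum_distrib_left)
  finally have p1: "wv n d 1 = \<pi> 1 * W" .
  show ?thesis unfolding W_def[symmetric]
  proof
    fix k
    show "\<pi> k = wv n d k / W"
    proof (cases "k \<in> {1..n}")
      case True
      then have "\<pi> k * wv n d 1 = \<pi> 1 * wv n d k" using prp by auto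
      then have "\<pi> k * wv n d 1 * W = wv n d 1 * wv n d k" using p1 by (simp add: algebra_simps)
      then show ?thesis using w1 Wpos by (simp add: field_simps)
    next
      case False
      then show ?thesis using van wv_out[OF n False] by simp
    qed
  qed
qed

lemma exist:
  assumes n: "n > 3" and e: "0 < e" and d: "0 < d" "d < 1"
  shows "is_stat_dist n (Pmat n e d) (\<lambda>k. wv n d k / (\<Sum>k=1..n. wv n d k))"
proof -
  define W where "W = (\<Sum>k=1..n. wv n d k)"
  have Wpos: "W > 0" unfolding W_def
    by (rule sum_pos) (use wv_pos[OF n d] n in auto)
  let ?p = "\<lambda>k. wv n d k / W"
  have van: "\<forall>k. k \<notin> {1..n} \<longrightarrow> ?p k = 0" using wv_out[OF n] by simp
  have "(\<Sum>k=1..n. ?p k) = 1" using Wpos by (simp add: sum_divide_distrib[symmetric] W_def)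
  moreover have "\<forall>k\<in>{1..n}. 0 \<le> ?p k" using wv_nonneg[OF d] Wpos by simp
  moreover have "\<forall>j. 1 \<le> j \<and> j < n \<longrightarrow> flow n e d ?p j = 0"
  proof (intro allI impI)
    fix j assume "1 \<le> j \<and> j < n"
    then have "wv n d j * Pmat n e d j (j+1) = wv n d (j+1) * Pmat n e d (j+1) j"
      using wv_flow[OF n] by auto
    then show "flow n e d ?p j = 0" unfolding flow_def by (simp add: field_simps)
  qed
  then have "\<forall>j\<in>{1..n}. (\<Sum>i=1..n. ?p i * Pmat n e d i j) = ?p j" using stat_iff[OF n van] by blast
  ultimately show ?thesis unfolding is_stat_dist_def W_def using van W_def by auto
qed


lemma split3:
  fixes n :: nat
  assumes "n \<ge> 3"
  shows "(\<Sum>k=1..n. f k) = f 1 + (\<Sum>k=2..n-1. f k) + (f n :: real)"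
proof -
  have "{1..n} = insert 1 (insert n {2..n-1})" using assms by auto
  moreover have "1 \<notin> insert n {2..n-1}" "n \<notin> {2..n-1}" using assms by auto
  ultimately show ?thesis by simp
qed

lemma mid_geom:
  fixes d :: real
  assumes "n > 3"
  shows "(\<Sum>k=2..n-1. wv n d k) * (1 - 2*d) = (1-d)^(n-2) - d^(n-2)"
proof -
  have "(\<Sum>k=2..n-1. wv n d k) = (\<Sum>k=2..n-1. (1-d)^(k-2) * d^(n-1-k))"
    by (rule sum.cong) (auto simp: wv_def)
  also have "\<dots> = (\<Sum>k=0+2..(n-3)+2. (1-d)^(k-2) * d^(n-1-k))"
  proof -
    have eq: "{2..n-1} = {0+2..(n-3)+2}" using assms by auto
    show ?thesis unfolding eq by (rule refl)
  qed
  also have "\<dots> = (\<Sum>i=0..n-3. (1-d)^(i+2-2) * d^(n-1-(i+2)))"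
    by (rule sum.shift_bounds_cl_nat_ivl)
  also have "\<dots> = (\<Sum>i<n-2. d^(n-2 - Suc i) * (1-d)^i)"
  proof -
    have "{0..n-3} = {..<n-2}" using assms by auto
    moreover have "n-1-(i+2) = n-2-Suc i" for i by simp
    ultimately show ?thesis by (simp add: mult.commute)
  qed
  finally have "(\<Sum>k=2..n-1. wv n d k) = (\<Sum>i<n-2. d^(n-2 - Suc i) * (1-d)^i)" .
  moreover have "(1-d)^(n-2) - d^(n-2) = ((1-d) - d) * (\<Sum>i<n-2. d^(n-2 - Suc i) * (1-d)^i)"
    by (rule power_diff_sumr2)
  ultimately show ?thesis by (simp add: algebra_simps)
qed

lemma W_closed:
  fixes d :: real
  assumes n: "n > 3"
  shows "(\<Sum>k=1..n. wv n d k) * (2*d - 1) = 2 * d^(n-1) - 2 * (1-d)^(n-1)"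
proof -
  have s: "(\<Sum>k=1..n. wv n d k) = d^(n-2) + (\<Sum>k=2..n-1. wv n d k) + (1-d)^(n-2)"
    using split3[of n "wv n d"] n by (simp add: wv_def)
  have m: "(\<Sum>k=2..n-1. wv n d k) * (1 - 2*d) = (1-d)^(n-2) - d^(n-2)" using mid_geom[OF n] .
  have p: "n - 1 = Suc (n-2)" using n by auto
  define M where "M = (\<Sum>k=2..n-1. wv n d k)"
  have s': "(\<Sum>k=1..n. wv n d k) = d^(n-2) + M + (1-d)^(n-2)" using s M_def by simp
  have m': "M * (1 - 2*d) = (1-d)^(n-2) - d^(n-2)" using m M_def by simp
  have "(\<Sum>k=1..n. wv n d k) * (2*d - 1) = (d^(n-2) + (1-d)^(n-2)) * (2*d-1) - M * (1 - 2*d)"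
    unfolding s' by (simp add: algebra_simps)
  also have "\<dots> = (d^(n-2) + (1-d)^(n-2)) * (2*d-1) - ((1-d)^(n-2) - d^(n-2))" using m' by simp
  also have "\<dots> = 2 * d^(n-1) - 2 * (1-d)^(n-1)" unfolding p power_Suc by (simp add: algebra_simps)
  finally show ?thesis .
qed

lemma D_neg:
  fixes d :: real
  assumes n: "n > 3" and d: "0 < d" "d < 1/2"
  shows "2 * d^(n-1) - 2 * (1-d)^(n-1) < 0"
proof -
  have "d^(n-1) < (1-d)^(n-1)" using power_strict_mono[of d "1-d" "n-1"] n d by auto
  then show ?thesis by simp
qed

lemma formula:
  fixes d :: real
  assumes n: "n > 3" and d: "0 < d" "d < 1/2"
  shows "(\<Sum>k=1..n. real k * (wv n d k / (\<Sum>k=1..n. wv n d k))) =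
              d ^ (n - 2) * (2 * d - 1) / (2 * d ^ (n - 1) - 2 * (1 - d) ^ (n - 1))
              + d ^ (n - 1) * (2 * d - 1)
                  / (2 * (1 - d)^2 * (d ^ (n - 1) - (1 - d) ^ (n - 1)))
                * (\<Sum>k=2..n-1. real k * ((1 - d) / d) ^ k)
              + real n * ((1 - d) ^ (n - 2) * (2 * d - 1)
                  / (2 * d ^ (n - 1) - 2 * (1 - d) ^ (n - 1)))"
proof -
  define W where "W = (\<Sum>k=1..n. wv n d k)"
  define D where "D = 2 * d^(n-1) - 2 * (1-d)^(n-1)"
  have Dn: "D \<noteq> 0" using D_neg[OF n d] D_def by simp
  have WD: "W = D / (2*d - 1)" using W_closed[OF n, of d] d unfolding W_def D_def
    by (simp add: field_simps)
  have iW: "x / W = x * (2*d-1) / D" for x using d Dn by (simp add: WD)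
  have D2: "2 * (1 - d)^2 * (d ^ (n - 1) - (1 - d) ^ (n - 1)) = (1-d)^2 * D"
    by (simp add: D_def algebra_simps)
  have mid: "real k * (wv n d k / W) =
      d ^ (n - 1) * (2 * d - 1) / (2 * (1 - d)^2 * (d ^ (n - 1) - (1 - d) ^ (n - 1)))
       * (real k * ((1 - d) / d) ^ k)" if k: "k \<in> {2..n-1}" for k
  proof -
    have wk: "wv n d k = (1-d)^(k-2) * d^(n-1-k)" using k by (auto simp: wv_def)
    have "k + (n-1-k) = n-1" "2 + (k-2) = k" using k by auto
    then have e1: "d^(n-1) = d^k * d^(n-1-k)" and e2: "(1-d)^k = (1-d)^2 * (1-d)^(k-2)"
      by (metis power_add)+
    have "d \<noteq> 0" "1 - d \<noteq> 0" using d by auto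
    then show ?thesis unfolding D2 iW unfolding wk e1 e2 power_divide using Dn
      by (simp add: field_simps)
  qed
  have "(\<Sum>k=1..n. real k * (wv n d k / W)) =
     1 * (wv n d 1 / W) + (\<Sum>k=2..n-1. real k * (wv n d k / W)) + real n * (wv n d n / W)"
    using split3[of n "\<lambda>k. real k * (wv n d k / W)"] n by simp
  also have "(\<Sum>k=2..n-1. real k * (wv n d k / W)) =
     d ^ (n - 1) * (2 * d - 1) / (2 * (1 - d)^2 * (d ^ (n - 1) - (1 - d) ^ (n - 1)))
                * (\<Sum>k=2..n-1. real k * ((1 - d) / d) ^ k)"
    unfolding sum_distrib_left by (rule sum.cong) (use mid in auto)
  finally have fin: "(\<Sum>k=1..n. real k * (wv n d k / W)) =
     1 * (wv n d 1 / W) + d ^ (n - 1) * (2 * d - 1) / (2 * (1 - d)^2 * (d ^ (n - 1) - (1 - d) ^ (n - 1)))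
                * (\<Sum>k=2..n-1. real k * ((1 - d) / d) ^ k) + real n * (wv n d n / W)" .
  have "wv n d 1 = d^(n-2)" "wv n d n = (1-d)^(n-2)" using n by (auto simp: wv_def)
  then show ?thesis using fin unfolding W_def[symmetric] D_def[symmetric] iW by simp
qed


lemma isCont_if_const [continuous_intros]:
  "isCont f x \<Longrightarrow> isCont g x \<Longrightarrow> isCont (\<lambda>d. if c then f d else g d) x"
  by (cases c) auto

lemma wv_lim: "((\<lambda>d. wv n d k) \<longlongrightarrow> wv n 0 k) (at_right (0::real))"
proof -
  have "isCont (\<lambda>d. wv n d k) 0"
    unfolding wv_def by (intro continuous_intros)
  then show ?thesis unfolding isCont_def by (rule tendsto_mono[OF at_le, rotated]) simp
qed

lemma wv0_mid: "n > 3 \<Longrightarrow> k \<in> {2..n-1} \<Longrightarrow> wv n 0 k = (if k = n - 1 then 1 else 0)"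
  by (auto simp: wv_def)

lemma at0:
  assumes n: "n > 3"
  shows "(\<Sum>k=1..n. wv n 0 k) = 2" "(\<Sum>k=1..n. real k * wv n 0 k) = 2 * real n - 1"
proof -
  have a: "wv n 0 1 = 0" "wv n 0 n = 1" using n by (auto simp: wv_def)
  have m1: "(\<Sum>k=2..n-1. wv n 0 k) = 1"
  proof -
    have "(\<Sum>k=2..n-1. wv n 0 k) = (\<Sum>k=2..n-1. if k = n - 1 then 1 else 0)"
      by (rule sum.cong) (use wv0_mid[OF n] in auto)
    also have "\<dots> = 1" using n by simp
    finally show ?thesis .
  qed
  have m2: "(\<Sum>k=2..n-1. real k * wv n 0 k) = real n - 1"
  proof -
    have "(\<Sum>k=2..n-1. real k * wv n 0 k) = (\<Sum>k=2..n-1. if k = n - 1 then real k else 0)"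
      by (rule sum.cong) (use wv0_mid[OF n] in auto)
    also have "\<dots> = real (n - 1)" using n by simp
    finally show ?thesis using n by simp
  qed
  show "(\<Sum>k=1..n. wv n 0 k) = 2" using split3[of n "wv n 0"] n a m1 by simp
  show "(\<Sum>k=1..n. real k * wv n 0 k) = 2 * real n - 1"
    using split3[of n "\<lambda>k. real k * wv n 0 k"] n a m2 by simp
qed

theorem theorem3p2:
  fixes n :: nat and \<epsilon> :: real
  assumes "n > 3" and "0 < \<epsilon>" and "\<epsilon> < 1/2"
  shows "(\<forall>\<delta>. 0 < \<delta> \<and> \<delta> < 1/2 \<longrightarrow>
            (\<exists>!\<pi>. is_stat_dist n (Pmat n \<epsilon> \<delta>) \<pi>) \<and>
            expected_state n (Pmat n \<epsilon> \<delta>) =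
              \<delta> ^ (n - 2) * (2 * \<delta> - 1) / (2 * \<delta> ^ (n - 1) - 2 * (1 - \<delta>) ^ (n - 1))
              + \<delta> ^ (n - 1) * (2 * \<delta> - 1)
                  / (2 * (1 - \<delta>)^2 * (\<delta> ^ (n - 1) - (1 - \<delta>) ^ (n - 1)))
                * (\<Sum>k=2..n-1. real k * ((1 - \<delta>) / \<delta>) ^ k)
              + real n * ((1 - \<delta>) ^ (n - 2) * (2 * \<delta> - 1)
                  / (2 * \<delta> ^ (n - 1) - 2 * (1 - \<delta>) ^ (n - 1))))
         \<and> ((\<lambda>\<delta>. expected_state n (Pmat n \<epsilon> \<delta>)) \<longlongrightarrow> (2 * real n - 1) / 2) (at_right 0)"
proof -
  have n: "n > 3" and e: "0 < \<epsilon>" using assms by auto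
  have ES: "expected_state n (Pmat n \<epsilon> d) = (\<Sum>k=1..n. real k * (wv n d k / (\<Sum>k=1..n. wv n d k)))"
    and EU: "\<exists>!\<pi>. is_stat_dist n (Pmat n \<epsilon> d) \<pi>"
    if d: "0 < d" "d < 1/2" for d
  proof -
    have d1: "d < 1" using d by simp
    show EU: "\<exists>!\<pi>. is_stat_dist n (Pmat n \<epsilon> d) \<pi>"
      using exist[OF n e d(1) d1] uniq[OF n e d(1) d1] by blast
    have "stat_dist n (Pmat n \<epsilon> d) = (\<lambda>k. wv n d k / (\<Sum>k=1..n. wv n d k))"
      unfolding stat_dist_def
      apply (rule the1_equality)
       apply (rule EU)
      apply (rule exist[OF n e d(1) d1])
      done
    then show "expected_state n (Pmat n \<epsilon> d) = (\<Sum>k=1..n. real k * (wv n d k / (\<Sum>k=1..n. wv n d k)))"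
      unfolding expected_state_def by simp
  qed
  have part1: "\<forall>\<delta>. 0 < \<delta> \<and> \<delta> < 1/2 \<longrightarrow>
            (\<exists>!\<pi>. is_stat_dist n (Pmat n \<epsilon> \<delta>) \<pi>) \<and>
            expected_state n (Pmat n \<epsilon> \<delta>) =
              \<delta> ^ (n - 2) * (2 * \<delta> - 1) / (2 * \<delta> ^ (n - 1) - 2 * (1 - \<delta>) ^ (n - 1))
              + \<delta> ^ (n - 1) * (2 * \<delta> - 1)
                  / (2 * (1 - \<delta>)^2 * (\<delta> ^ (n - 1) - (1 - \<delta>) ^ (n - 1)))
                * (\<Sum>k=2..n-1. real k * ((1 - \<delta>) / \<delta>) ^ k)
              + real n * ((1 - \<delta>) ^ (n - 2) * (2 * \<delta> - 1)
                  / (2 * \<delta> ^ (n - 1) - 2 * (1 - \<delta>) ^ (n - 1)))"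
    using ES EU formula[OF n] by auto
  define G where "G d = (\<Sum>k=1..n. real k * wv n d k) / (\<Sum>k=1..n. wv n d k)" for d
  have GL: "(G \<longlongrightarrow> (2 * real n - 1) / 2) (at_right 0)"
  proof -
    have "(G \<longlongrightarrow> (\<Sum>k=1..n. real k * wv n 0 k) / (\<Sum>k=1..n. wv n 0 k)) (at_right 0)"
      unfolding G_def using at0[OF n]
      by (intro tendsto_divide tendsto_sum tendsto_mult tendsto_const wv_lim) auto
    then show ?thesis using at0[OF n] by simp
  qed
  have ev: "eventually (\<lambda>d. G d = expected_state n (Pmat n \<epsilon> d)) (at_right (0::real))"
  proof -
    have "eventually (\<lambda>d. d \<in> {0<..<1/2}) (at_right (0::real))"
      by (rule eventually_at_right_real) simp
    then show ?thesis
      by eventually_elim (auto simp: ES G_def sum_divide_distrib)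
  qed
  have "((\<lambda>\<delta>. expected_state n (Pmat n \<epsilon> \<delta>)) \<longlongrightarrow> (2 * real n - 1) / 2) (at_right 0)"
    by (rule Lim_transform_eventually[OF GL ev])
  with part1 show ?thesis by blast
qed

end
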